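(* Let $k, m, \nu, d$ be positive integers and let $t \in \mathbb{R}$. Suppose $\tilde{\bm{c}} = \tilde{\bm{c}}(\bm{\theta}) \in \mathbb{R}^k$, $\tilde{\bm{A}} = \tilde{\bm{A}}(\bm{\theta}) \in \mathbb{R}^{m\times k}$ and $\tilde{\bm{b}} = \tilde{\bm{b}}(\bm{\theta}) \in \mathbb{R}^m$ are such that every entry of each of them is a real polynomial of degree at most $d$ in $\nu$ real variables $\bm{\theta} \in \mathbb{R}^\nu$. Assume that for every $\bm{\theta} \in \mathbb{R}^\nu$ the linear program $\max\{\tilde{\bm{c}}^\top \bm{y} : \tilde{\bm{A}}\bm{y} \le \tilde{\bm{b}},\ \bm{y}\in\mathbb{R}^k\}$ is feasible and bounded. Then there exist at most $\binom{m+2k}{2k}(m+2k+2)$ real polynomials $p_1,\dots,p_L$ in $\bm{\theta}$, each of degree at most $(2k+1)d$, with the following property: for any $\bm{\theta}, \bm{\theta}' \in \mathbb{R}^\nu$ such that $\operatorname{sign}(p_j(\bm{\theta})) = \operatorname{sign}(p_j(\bm{\theta}'))$ for all $j = 1,\dots,L$ (where the sign takes values in $\{<0, =0, >0\}$), the statement $\max\{\tilde{\bm{c}}(\bm{\theta})^\top \bm{y} : \tilde{\bm{A}}(\bm{\theta})\bm{y} \le \tilde{\bm{b}}(\bm{\theta})\} \ge t$ holds if and only if $\max\{\tilde{\bm{c}}(\bm{\theta}')^\top \bm{y} : \tilde{\bm{A}}(\bm{\theta}')\bm{y} \le \tilde{\bm{b}}(\bm{\theta}')\} \ge t$ holds.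
   Context: Vector inequalities are entrywise. *)

theory Defs
  imports "HOL-Analysis.Analysis"
begin

text \<open>A real polynomial of total degree at most d in the variables theta (indexed by the
  finite type 'v, so nu = CARD('v)): a finite linear combination of monomials
  prod_i theta_i ^ alpha_i with sum_i alpha_i at most d.\<close>
definition poly_deg_le :: "nat \<Rightarrow> (real^'v \<Rightarrow> real) \<Rightarrow> bool" where
  "poly_deg_le d f \<longleftrightarrow>
     (\<exists>(S :: ('v \<Rightarrow> nat) set) (coef :: ('v \<Rightarrow> nat) \<Rightarrow> real).
        finite S \<and> (\<forall>\<alpha>\<in>S. sum \<alpha> UNIV \<le> d) \<and>
        (\<forall>\<theta>. f \<theta> = (\<Sum>\<alpha>\<in>S. coef \<alpha> * (\<Prod>i\<in>UNIV. (\<theta> $ i) ^ (\<alpha> i)))))"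

definition lp_feasible_set :: "real^'k^'m \<Rightarrow> real^'m \<Rightarrow> (real^'k) set" where
  "lp_feasible_set A b = {y. \<forall>i. (A *v y) $ i \<le> b $ i}"

definition lp_feasible_bounded :: "real^'k \<Rightarrow> real^'k^'m \<Rightarrow> real^'m \<Rightarrow> bool" where
  "lp_feasible_bounded c A b \<longleftrightarrow>
     lp_feasible_set A b \<noteq> {} \<and> bdd_above ((\<lambda>y. c \<bullet> y) ` lp_feasible_set A b)"

text \<open>Optimal value max { c^T y : A y <= b } (the supremum, attained when feasible and bounded).\<close>
definition lp_value :: "real^'k \<Rightarrow> real^'k^'m \<Rightarrow> real^'m \<Rightarrow> real" where
  "lp_value c A b = Sup ((\<lambda>y. c \<bullet> y) ` lp_feasible_set A b)"

end

theory Submission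
  imports Defs
begin

definition mono_v :: "('v::finite \<Rightarrow> nat) \<Rightarrow> real^'v \<Rightarrow> real" where
  "mono_v \<alpha> \<theta> = (\<Prod>i\<in>UNIV. (\<theta> $ i) ^ (\<alpha> i))"

lemma pdl_alt: "poly_deg_le d f \<longleftrightarrow>
     (\<exists>(S :: ('v::finite \<Rightarrow> nat) set) coef. finite S \<and> (\<forall>\<alpha>\<in>S. sum \<alpha> UNIV \<le> d) \<and>
        f = (\<lambda>\<theta>. \<Sum>\<alpha>\<in>S. coef \<alpha> * mono_v \<alpha> \<theta>))"
  unfolding poly_deg_le_def mono_v_def by (auto simp: fun_eq_iff)

lemma pdl_monomial:
  assumes "sum \<alpha> UNIV \<le> d"
  shows "poly_deg_le d (\<lambda>\<theta>::real^'v. a * mono_v \<alpha> \<theta>)"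
  unfolding pdl_alt
  by (rule exI[of _ "{\<alpha>}"], rule exI[of _ "\<lambda>_. a"]) (use assms in auto)

lemma pdl_const: "poly_deg_le d (\<lambda>\<theta>::real^'v. a)"
proof -
  have "poly_deg_le d (\<lambda>\<theta>::real^'v. a * mono_v (\<lambda>_. 0) \<theta>)"
    by (rule pdl_monomial) simp
  then show ?thesis by (simp add: mono_v_def)
qed

lemma pdl_zero: "poly_deg_le d (\<lambda>\<theta>::real^'v. 0)"
  by (rule pdl_const)

lemma pdl_add:
  assumes "poly_deg_le d f" "poly_deg_le d g"
  shows "poly_deg_le d (\<lambda>\<theta>. f \<theta> + g \<theta>)"
proof -
  obtain S1 c1 where h1: "finite S1" "\<forall>\<alpha>\<in>S1. sum \<alpha> UNIV \<le> d"
    "f = (\<lambda>\<theta>. \<Sum>\<alpha>\<in>S1. c1 \<alpha> * mono_v \<alpha> \<theta>)"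
    using assms(1) unfolding pdl_alt by blast
  obtain S2 c2 where h2: "finite S2" "\<forall>\<alpha>\<in>S2. sum \<alpha> UNIV \<le> d" "g = (\<lambda>\<theta>. \<Sum>\<alpha>\<in>S2. c2 \<alpha> * mono_v \<alpha> \<theta>)"
    using assms(2) unfolding pdl_alt by blast
  note h = h1 h2
  define c where "c \<alpha> = (if \<alpha> \<in> S1 then c1 \<alpha> else 0) + (if \<alpha> \<in> S2 then c2 \<alpha> else 0)" for \<alpha>
  have "(\<lambda>\<theta>. f \<theta> + g \<theta>) = (\<lambda>\<theta>. \<Sum>\<alpha>\<in>S1 \<union> S2. c \<alpha> * mono_v \<alpha> \<theta>)"
  proof
    fix \<theta>
    have "(\<Sum>\<alpha>\<in>S1 \<union> S2. c \<alpha> * mono_v \<alpha> \<theta>) =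
      (\<Sum>\<alpha>\<in>S1 \<union> S2. (if \<alpha> \<in> S1 then c1 \<alpha> * mono_v \<alpha> \<theta> else 0)) +
      (\<Sum>\<alpha>\<in>S1 \<union> S2. (if \<alpha> \<in> S2 then c2 \<alpha> * mono_v \<alpha> \<theta> else 0))"
      unfolding sum.distrib[symmetric] by (rule sum.cong) (auto simp: c_def distrib_right)
    also have "\<dots> = f \<theta> + g \<theta>"
      using h by (simp add: sum.If_cases Int_absorb1 Int_absorb2)
    finally show "f \<theta> + g \<theta> = (\<Sum>\<alpha>\<in>S1 \<union> S2. c \<alpha> * mono_v \<alpha> \<theta>)" by simp
  qed
  moreover have "finite (S1 \<union> S2)" "\<forall>\<alpha>\<in>S1 \<union> S2. sum \<alpha> UNIV \<le> d" using h by auto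
  ultimately show ?thesis unfolding pdl_alt by (intro exI[of _ "S1 \<union> S2"] exI[of _ c]) simp
qed

lemma pdl_scale:
  assumes "poly_deg_le d f"
  shows "poly_deg_le d (\<lambda>\<theta>. a * f \<theta>)"
proof -
  from assms obtain S1 c1 where h: "finite S1" "\<forall>\<alpha>\<in>S1. sum \<alpha> UNIV \<le> d"
    "f = (\<lambda>\<theta>. \<Sum>\<alpha>\<in>S1. c1 \<alpha> * mono_v \<alpha> \<theta>)"
    using assms unfolding pdl_alt by blast
  have "(\<lambda>\<theta>. a * f \<theta>) = (\<lambda>\<theta>. \<Sum>\<alpha>\<in>S1. (a * c1 \<alpha>) * mono_v \<alpha> \<theta>)"
    unfolding h(3) by (rule ext) (simp add: sum_distrib_left mult.assoc)
  then show ?thesis unfolding pdl_alt using h(1,2) by (intro exI[of _ S1] exI[of _ "\<lambda>\<alpha>. a * c1 \<alpha>"]) simp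
qed

lemma pdl_sum:
  assumes "finite F" "\<And>x. x \<in> F \<Longrightarrow> poly_deg_le d (f x)"
  shows "poly_deg_le d (\<lambda>\<theta>. \<Sum>x\<in>F. f x \<theta>)"
  using assms
proof (induction F rule: finite_induct)
  case empty then show ?case by (simp add: pdl_zero)
next
  case (insert x F)
  then show ?case by (simp add: pdl_add)
qed

lemma pdl_mono:
  assumes "poly_deg_le d f" "d \<le> d'"
  shows "poly_deg_le d' f"
proof -
  obtain S1 c1 where h: "finite S1" "\<forall>\<alpha>\<in>S1. sum \<alpha> UNIV \<le> d"
    "f = (\<lambda>\<theta>. \<Sum>\<alpha>\<in>S1. c1 \<alpha> * mono_v \<alpha> \<theta>)"
    using assms(1) unfolding pdl_alt by blast
  have "\<forall>\<alpha>\<in>S1. sum \<alpha> UNIV \<le> d'" using h(2) assms(2) by auto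
  then show ?thesis unfolding pdl_alt using h(1,3) by (intro exI[of _ S1] exI[of _ c1]) simp
qed

lemma mono_v_mult: "mono_v \<alpha> \<theta> * mono_v \<beta> \<theta> = mono_v (\<lambda>i. \<alpha> i + \<beta> i) \<theta>"
  unfolding mono_v_def by (simp add: prod.distrib[symmetric] power_add)

lemma pdl_mult:
  assumes "poly_deg_le d1 f" "poly_deg_le d2 g"
  shows "poly_deg_le (d1 + d2) (\<lambda>\<theta>. f \<theta> * g \<theta>)"
proof -
  obtain S1 c1 where h1: "finite S1" "\<forall>\<alpha>\<in>S1. sum \<alpha> UNIV \<le> d1"
    "f = (\<lambda>\<theta>. \<Sum>\<alpha>\<in>S1. c1 \<alpha> * mono_v \<alpha> \<theta>)"
    using assms(1) unfolding pdl_alt by blast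
  obtain S2 c2 where h2: "finite S2" "\<forall>\<alpha>\<in>S2. sum \<alpha> UNIV \<le> d2" "g = (\<lambda>\<theta>. \<Sum>\<alpha>\<in>S2. c2 \<alpha> * mono_v \<alpha> \<theta>)"
    using assms(2) unfolding pdl_alt by blast
  note h = h1 h2
  have eq: "(\<lambda>\<theta>. f \<theta> * g \<theta>) = (\<lambda>\<theta>. \<Sum>\<alpha>\<in>S1. \<Sum>\<beta>\<in>S2. (c1 \<alpha> * c2 \<beta>) * mono_v (\<lambda>i. \<alpha> i + \<beta> i) \<theta>)"
    using h by (simp add: sum_product mono_v_mult[symmetric] mult_ac)
  show ?thesis unfolding eq
  proof (intro pdl_sum h)
    fix \<alpha> \<beta> assume "\<alpha> \<in> S1" "\<beta> \<in> S2"
    then have "sum (\<lambda>i. \<alpha> i + \<beta> i) UNIV \<le> d1 + d2"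
      using h by (simp add: sum.distrib add_mono)
    then show "poly_deg_le (d1 + d2) (\<lambda>\<theta>. c1 \<alpha> * c2 \<beta> * mono_v (\<lambda>i. \<alpha> i + \<beta> i) \<theta>)"
      by (rule pdl_monomial)
  qed
qed

lemma pdl_prod:
  assumes "finite F" "\<And>x. x \<in> F \<Longrightarrow> poly_deg_le d (f x)"
  shows "poly_deg_le (card F * d) (\<lambda>\<theta>. \<Prod>x\<in>F. f x \<theta>)"
  using assms
proof (induction F rule: finite_induct)
  case empty then show ?case by (simp add: pdl_const)
next
  case (insert x F)
  then have "poly_deg_le (d + card F * d) (\<lambda>\<theta>. f x \<theta> * (\<Prod>x\<in>F. f x \<theta>))"
    by (intro pdl_mult) auto
  then show ?case using insert by simp
qed

lemma pdl_det:
  fixes M :: "real^'v \<Rightarrow> real^'n^'n"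
  assumes "\<And>i j. poly_deg_le d (\<lambda>\<theta>. M \<theta> $ i $ j)"
  shows "poly_deg_le (CARD('n) * d) (\<lambda>\<theta>. det (M \<theta>))"
proof -
  have "poly_deg_le (CARD('n) * d) (\<lambda>\<theta>. \<Sum>p\<in>{p. p permutes (UNIV::'n set)}.
           of_int (sign p) * (\<Prod>i\<in>UNIV. M \<theta> $ i $ p i))"
  proof (rule pdl_sum)
    fix p
    have "poly_deg_le (card (UNIV::'n set) * d) (\<lambda>\<theta>. \<Prod>i\<in>UNIV. M \<theta> $ i $ p i)"
      by (rule pdl_prod) (simp_all add: assms)
    then show "poly_deg_le (CARD('n) * d) (\<lambda>\<theta>. of_int (sign p) * (\<Prod>i\<in>UNIV. M \<theta> $ i $ p i))"
      by (rule pdl_scale)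
  qed simp
  then show ?thesis unfolding det_def .
qed

lemma core:
  fixes G :: "'i::finite \<Rightarrow> 'a::euclidean_space" and h :: "'i \<Rightarrow> real" and e :: 'a
  assumes full: "\<And>v. (\<forall>i. G i \<bullet> v = 0) \<Longrightarrow> v = 0"
    and bdd: "bdd_above ((\<lambda>z. e \<bullet> z) ` {z. \<forall>i. G i \<bullet> z \<le> h i})"
    and feas: "\<forall>i. G i \<bullet> z0 \<le> h i"
  shows "\<exists>z. (\<forall>i. G i \<bullet> z \<le> h i) \<and> e \<bullet> z0 \<le> e \<bullet> z \<and>
             (\<forall>v. (\<forall>i. G i \<bullet> z = h i \<longrightarrow> G i \<bullet> v = 0) \<longrightarrow> v = 0)"
  using feas
proof (induction "card {i. G i \<bullet> z0 < h i}" arbitrary: z0 rule: less_induct)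
  case less
  show ?case
  proof (cases "\<forall>v. (\<forall>i. G i \<bullet> z0 = h i \<longrightarrow> G i \<bullet> v = 0) \<longrightarrow> v = 0")
    case True then show ?thesis using less.prems by auto
  next
    case False
    then obtain v where v0: "v \<noteq> 0" and vt: "\<And>i. G i \<bullet> z0 = h i \<Longrightarrow> G i \<bullet> v = 0" by auto
    obtain B where B: "\<And>z. \<forall>i. G i \<bullet> z \<le> h i \<Longrightarrow> e \<bullet> z \<le> B"
      using bdd unfolding bdd_above_def by auto
    have pos: "\<exists>i. G i \<bullet> w > 0" if "e \<bullet> w > 0" for w
    proof (rule ccontr)
      assume "\<not> (\<exists>i. G i \<bullet> w > 0)"
      then have nw: "G i \<bullet> w \<le> 0" for i by (simp add: not_less)
      define l where "l = (\<bar>B - e \<bullet> z0\<bar> + 1) / (e \<bullet> w)"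
      have l0: "l > 0" unfolding l_def using that by simp
      have "\<forall>i. G i \<bullet> (z0 + l *\<^sub>R w) \<le> h i"
      proof
        fix i
        have "l * (G i \<bullet> w) \<le> 0" using l0 nw[of i] by (simp add: mult_nonneg_nonpos)
        then show "G i \<bullet> (z0 + l *\<^sub>R w) \<le> h i"
          using less.prems by (simp add: inner_add_right) (smt (verit))
      qed
      then have "e \<bullet> (z0 + l *\<^sub>R w) \<le> B" by (rule B)
      moreover have "e \<bullet> (z0 + l *\<^sub>R w) = e \<bullet> z0 + \<bar>B - e \<bullet> z0\<bar> + 1"
        unfolding l_def using that by (simp add: inner_add_right)
      ultimately show False by linarith
    qed
    have "\<exists>s. e \<bullet> s \<ge> 0 \<and> (\<forall>i. G i \<bullet> z0 = h i \<longrightarrow> G i \<bullet> s = 0) \<and> (\<exists>i. G i \<bullet> s > 0)"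
    proof -
      obtain i0 where i0: "G i0 \<bullet> v \<noteq> 0" using full v0 by blast
      consider "e \<bullet> v > 0" | "e \<bullet> v < 0" | "e \<bullet> v = 0" by linarith
      then show ?thesis
      proof cases
        case 1 then show ?thesis using pos[of v] vt by (intro exI[of _ v]) auto
      next
        case 2 then show ?thesis using pos[of "-v"] vt by (intro exI[of _ "-v"]) auto
      next
        case 3
        show ?thesis
        proof (cases "G i0 \<bullet> v > 0")
          case True then show ?thesis using 3 vt by (intro exI[of _ v]) auto
        next
          case False then have "G i0 \<bullet> (-v) > 0" using i0 by simp
          then show ?thesis using 3 vt by (intro exI[of _ "-v"]) auto
        qed
      qed
    qed
    then obtain s where s1: "e \<bullet> s \<ge> 0" and s2: "\<And>i. G i \<bullet> z0 = h i \<Longrightarrow> G i \<bullet> s = 0"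
      and s3: "\<exists>i. G i \<bullet> s > 0" by blast
    define J where "J = {i. G i \<bullet> s > 0}"
    define ratio where "ratio i = (h i - G i \<bullet> z0) / (G i \<bullet> s)" for i
    have Jne: "J \<noteq> {}" and Jfin: "finite J" using s3 unfolding J_def by auto
    define l where "l = Min (ratio ` J)"
    have "l \<in> ratio ` J" unfolding l_def using Jne Jfin by (intro Min_in) auto
    then obtain i1 where i1: "i1 \<in> J" "ratio i1 = l" by auto
    have slackJ: "G i \<bullet> z0 < h i" if "i \<in> J" for i
      using that s2[of i] less.prems unfolding J_def by (metis less_eq_real_def less_irrefl mem_Collect_eq)
    have ratio_pos: "ratio i > 0" if "i \<in> J" for i
      using slackJ[OF that] that unfolding ratio_def J_def by simp
    have l_le: "l \<le> ratio i" if "i \<in> J" for i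
      unfolding l_def using that Jfin by simp
    have l0: "l > 0" using ratio_pos[OF i1(1)] i1(2) by simp
    define z1 where "z1 = z0 + l *\<^sub>R s"
    have Gz1: "G i \<bullet> z1 = G i \<bullet> z0 + l * (G i \<bullet> s)" for i
      unfolding z1_def by (simp add: inner_add_right)
    have feas1: "\<forall>i. G i \<bullet> z1 \<le> h i"
    proof
      fix i
      show "G i \<bullet> z1 \<le> h i"
      proof (cases "i \<in> J")
        case True
        then have gs: "G i \<bullet> s > 0" unfolding J_def by simp
        have "l * (G i \<bullet> s) \<le> ratio i * (G i \<bullet> s)"
          using l_le[OF True] gs by (simp add: mult_right_mono)
        also have "\<dots> = h i - G i \<bullet> z0" unfolding ratio_def using gs by simp
        finally show ?thesis unfolding Gz1 by simp
      next
        case False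
        then have "G i \<bullet> s \<le> 0" unfolding J_def by simp
        then have "l * (G i \<bullet> s) \<le> 0" using l0 by (simp add: mult_nonneg_nonpos)
        moreover have "G i \<bullet> z0 \<le> h i" using less.prems by blast
        ultimately show ?thesis unfolding Gz1 by linarith
      qed
    qed
    have obj: "e \<bullet> z0 \<le> e \<bullet> z1"
      unfolding z1_def using s1 l0 by (simp add: inner_add_right)
    have sub: "{i. G i \<bullet> z1 < h i} \<subset> {i. G i \<bullet> z0 < h i}"
    proof
      show "{i. G i \<bullet> z1 < h i} \<subseteq> {i. G i \<bullet> z0 < h i}"
      proof
        fix i assume "i \<in> {i. G i \<bullet> z1 < h i}"
        then have a: "G i \<bullet> z1 < h i" by simp
        show "i \<in> {i. G i \<bullet> z0 < h i}"
        proof (rule ccontr)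
          assume "i \<notin> {i. G i \<bullet> z0 < h i}"
          then have "G i \<bullet> z0 = h i" using less.prems by (simp add: not_less) (meson antisym)
          then show False using a s2[of i] unfolding Gz1 by simp
        qed
      qed
      have "G i1 \<bullet> z1 = h i1"
        unfolding Gz1 using i1 unfolding ratio_def J_def by (auto simp: field_simps)
      moreover have "G i1 \<bullet> z0 < h i1" using slackJ[OF i1(1)] .
      ultimately show "{i. G i \<bullet> z1 < h i} \<noteq> {i. G i \<bullet> z0 < h i}"
        by (metis (mono_tags, lifting) less_irrefl mem_Collect_eq)
    qed
    have "card {i. G i \<bullet> z1 < h i} < card {i. G i \<bullet> z0 < h i}"
      by (rule psubset_card_mono[OF _ sub]) simp
    from less.hyps[OF this feas1] obtain z where
      "(\<forall>i. G i \<bullet> z \<le> h i) \<and> e \<bullet> z1 \<le> e \<bullet> z \<and>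
             (\<forall>v. (\<forall>i. G i \<bullet> z = h i \<longrightarrow> G i \<bullet> v = 0) \<longrightarrow> v = 0)" by blast
    then show ?thesis using obj by (intro exI[of _ z]) auto
  qed
qed

lemma basis_sel:
  fixes G :: "'i::finite \<Rightarrow> real^'n"
  assumes "\<And>v. (\<forall>i\<in>T. G i \<bullet> v = 0) \<Longrightarrow> v = 0"
  shows "\<exists>S \<subseteq> T. card S = CARD('n) \<and> (\<forall>\<sigma>. bij_betw \<sigma> UNIV S \<longrightarrow> det (\<chi> r. G (\<sigma> r)) \<noteq> 0)"
proof -
  define V where "V = G ` T"
  have spanV: "span V = UNIV"
  proof (rule ccontr)
    assume "span V \<noteq> UNIV"
    from span_not_UNIV_orthogonal[OF this] obtain a where a: "a \<noteq> 0" "\<forall>x\<in>span V. a \<bullet> x = 0"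
      by blast
    have "\<forall>i\<in>T. G i \<bullet> a = 0"
      using a(2) span_base[of _ V] unfolding V_def by (auto simp: inner_commute)
    then show False using assms a(1) by blast
  qed
  obtain B where B: "B \<subseteq> V" "independent B" "V \<subseteq> span B" "card B = dim V"
    by (rule basis_exists)
  have dimV: "dim V = CARD('n)"
  proof -
    have "dim V = dim (UNIV :: (real^'n) set)" by (metis dim_span spanV)
    then show ?thesis by simp
  qed
  obtain S where S: "S \<subseteq> T" "inj_on G S" "B = G ` S"
    using B(1) subset_image_inj[of B G T] unfolding V_def by blast
  have cardS: "card S = CARD('n)" using S B(4) dimV card_image by metis
  have "det (\<chi> r. G (\<sigma> r)) \<noteq> 0" if bij: "bij_betw \<sigma> UNIV S" for \<sigma>
  proof -
    have "rows (\<chi> r. G (\<sigma> r)) = G ` \<sigma> ` UNIV"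
      unfolding rows_def row_def by (auto simp: vec_eq_iff)
    also have "\<dots> = B" using bij S(3) by (simp add: bij_betw_def)
    finally have "rank (\<chi> r. G (\<sigma> r)) = card B"
      by (simp add: row_rank_def dim_eq_card_independent B(2))
    then show ?thesis using det_eq_0_rank[of "\<chi> r. G (\<sigma> r)"] B(4) dimV by simp
  qed
  then show ?thesis using S(1) cardS by blast
qed

definition Gs :: "real^'k^'m \<Rightarrow> ('m + 'k \<times> bool) \<Rightarrow> real^('k \<times> bool)" where
  "Gs A i = (case i of Inl r \<Rightarrow> (\<chi> p. if snd p then A$r$(fst p) else - A$r$(fst p))
                     | Inr q \<Rightarrow> (\<chi> p. if p = q then -1 else 0))"

definition Hs :: "real^'m \<Rightarrow> ('m + 'k \<times> bool) \<Rightarrow> real" where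
  "Hs b i = (case i of Inl r \<Rightarrow> b$r | Inr q \<Rightarrow> 0)"

definition Es :: "real^'k \<Rightarrow> real^('k \<times> bool)" where
  "Es c = (\<chi> p. if snd p then c$(fst p) else - c$(fst p))"

definition yof :: "real^('k \<times> bool) \<Rightarrow> real^'k" where
  "yof z = (\<chi> j. z$(j,True) - z$(j,False))"

definition zof :: "real^'k \<Rightarrow> real^('k \<times> bool)" where
  "zof y = (\<chi> p. if snd p then max (y$fst p) 0 else max (- (y$fst p)) 0)"

lemma sum_kb: "(\<Sum>p\<in>(UNIV :: ('k::finite \<times> bool) set). f p) = (\<Sum>j\<in>UNIV. f (j,True) + f (j,False))"
proof -
  have "(\<Sum>p\<in>(UNIV :: ('k \<times> bool) set). f p) = (\<Sum>j\<in>UNIV. \<Sum>s\<in>UNIV. f (j,s))"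
    by (simp add: sum.cartesian_product UNIV_Times_UNIV[symmetric] del: UNIV_Times_UNIV)
  also have "\<dots> = (\<Sum>j\<in>UNIV. f (j,True) + f (j,False))"
    by (simp add: UNIV_bool add.commute)
  finally show ?thesis .
qed

lemma Gs_Inl: "Gs A (Inl r) \<bullet> z = (A *v yof z) $ r"
  by (simp add: Gs_def inner_vec_def sum_kb matrix_vector_mult_def yof_def
      algebra_simps sum_subtractf)

lemma Gs_Inr: "Gs A (Inr q) \<bullet> z = - z $ q"
proof -
  have "Gs A (Inr q) \<bullet> z = (\<Sum>i\<in>UNIV. if i = q then - z $ i else 0)"
    unfolding Gs_def inner_vec_def by (intro sum.cong) auto
  then show ?thesis by simp
qed

lemma Es_inner: "Es c \<bullet> z = c \<bullet> yof z"
  by (simp add: Es_def inner_vec_def sum_kb yof_def algebra_simps sum_subtractf)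

lemma yof_zof: "yof (zof y) = y"
  by (simp add: yof_def zof_def vec_eq_iff max_def)

lemma Gs_full: "(\<forall>i. Gs A i \<bullet> v = 0) \<Longrightarrow> v = 0"
  by (metis Gs_Inr neg_equal_0_iff_equal vec_eq_iff zero_index)

lemma feas_split:
  assumes "\<forall>i. Gs A i \<bullet> z \<le> Hs b i"
  shows "yof z \<in> lp_feasible_set A b"
  using assms[rule_format, of "Inl _"] by (simp add: lp_feasible_set_def Gs_Inl Hs_def)

lemma feas_zof:
  assumes "y \<in> lp_feasible_set A b"
  shows "\<forall>i. Gs A i \<bullet> zof y \<le> Hs b i"
proof
  fix i show "Gs A i \<bullet> zof y \<le> Hs b i"
  proof (cases i)
    case (Inl r) then show ?thesis using assms
      by (simp add: Gs_Inl Hs_def yof_zof lp_feasible_set_def)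
  next
    case (Inr q) then show ?thesis
      by (simp add: Gs_Inr Hs_def zof_def)
  qed
qed

lemma sgn_div_le: "(D::real) \<noteq> 0 \<Longrightarrow> (Q / D \<le> 0 \<longleftrightarrow> sgn Q * sgn D \<le> 0)"
  by (cases "D > 0"; cases "Q > 0"; cases "Q = 0") (auto simp: divide_le_0_iff sgn_if)

lemma sgn_div_ge: "(D::real) \<noteq> 0 \<Longrightarrow> (0 \<le> Q / D \<longleftrightarrow> sgn Q * sgn D \<ge> 0)"
  by (cases "D > 0"; cases "Q > 0"; cases "Q = 0") (auto simp: zero_le_divide_iff sgn_if)

definition sig :: "('m::finite + 'k::finite \<times> bool) set \<Rightarrow> ('k \<times> bool) \<Rightarrow> ('m + 'k \<times> bool)" where
  "sig S = (SOME \<sigma>. bij_betw \<sigma> UNIV S)"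

definition MSm :: "real^'k^'m \<Rightarrow> ('m + 'k \<times> bool) set \<Rightarrow> real^('k \<times> bool)^('k \<times> bool)" where
  "MSm A S = (\<chi> r. Gs A (sig S r))"

definition hS :: "real^'m \<Rightarrow> ('m + 'k::finite \<times> bool) set \<Rightarrow> real^('k \<times> bool)" where
  "hS b S = (\<chi> r. Hs b (sig S r))"

definition DD :: "real^'k^'m \<Rightarrow> ('m + 'k \<times> bool) set \<Rightarrow> real" where
  "DD A S = det (MSm A S)"

definition NN :: "real^'k^'m \<Rightarrow> real^'m \<Rightarrow> ('m + 'k \<times> bool) set \<Rightarrow> 'k \<times> bool \<Rightarrow> real" where
  "NN A b S col = det (\<chi> i j. if j = col then hS b S $ i else MSm A S $ i $ j)"

definition xS :: "real^'k^'m \<Rightarrow> real^'m \<Rightarrow> ('m + 'k \<times> bool) set \<Rightarrow> real^('k \<times> bool)" where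
  "xS A b S = (\<chi> col. NN A b S col / DD A S)"

definition QQ :: "real^'k^'m \<Rightarrow> real^'m \<Rightarrow> ('m + 'k \<times> bool) set \<Rightarrow> ('m + 'k \<times> bool) \<Rightarrow> real" where
  "QQ A b S i = (\<Sum>col\<in>UNIV. Gs A i $ col * NN A b S col) - Hs b i * DD A S"

definition RR :: "real \<Rightarrow> real^'k \<Rightarrow> real^'k^'m \<Rightarrow> real^'m \<Rightarrow> ('m + 'k \<times> bool) set \<Rightarrow> real" where
  "RR t c A b S = (\<Sum>col\<in>UNIV. Es c $ col * NN A b S col) - t * DD A S"

lemma xS_ineq:
  assumes "DD A S \<noteq> 0"
  shows "Gs A i \<bullet> xS A b S \<le> Hs b i \<longleftrightarrow> sgn (QQ A b S i) * sgn (DD A S) \<le> 0"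
proof -
  have "Gs A i \<bullet> xS A b S - Hs b i = QQ A b S i / DD A S"
    using assms by (simp add: inner_vec_def xS_def QQ_def sum_divide_distrib[symmetric] field_simps)
  then show ?thesis using sgn_div_le[OF assms, of "QQ A b S i"] by linarith
qed

lemma xS_obj:
  assumes "DD A S \<noteq> 0"
  shows "t \<le> Es c \<bullet> xS A b S \<longleftrightarrow> sgn (RR t c A b S) * sgn (DD A S) \<ge> 0"
proof -
  have "Es c \<bullet> xS A b S - t = RR t c A b S / DD A S"
    using assms by (simp add: inner_vec_def xS_def RR_def sum_divide_distrib[symmetric] field_simps)
  then show ?thesis using sgn_div_ge[OF assms, of "RR t c A b S"] by linarith
qed

lemma xS_unique:
  assumes "DD A S \<noteq> 0" "\<forall>r. Gs A (sig S r) \<bullet> z = Hs b (sig S r)"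
  shows "z = xS A b S"
proof -
  have "MSm A S *v z = hS b S"
    using assms(2) by (simp add: vec_eq_iff matrix_vector_mult_def MSm_def hS_def inner_vec_def mult.commute)
  then show ?thesis
    using cramer[of "MSm A S" z "hS b S"] assms(1)
    by (simp add: DD_def xS_def NN_def)
qed

lemma key:
  fixes c :: "real^'k" and A :: "real^'k^'m" and b :: "real^'m"
  assumes fb: "lp_feasible_bounded c A b"
  shows "t \<le> lp_value c A b \<longleftrightarrow> (\<exists>S. card S = CARD('k \<times> bool) \<and> DD A S \<noteq> 0 \<and>
           (\<forall>i. sgn (QQ A b S i) * sgn (DD A S) \<le> 0) \<and> sgn (RR t c A b S) * sgn (DD A S) \<ge> 0)"
proof -
  let ?F = "lp_feasible_set A b"
  let ?Z = "{z. \<forall>i. Gs A i \<bullet> z \<le> Hs b i}"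
  have ne: "?F \<noteq> {}" and bdd: "bdd_above ((\<lambda>y. c \<bullet> y) ` ?F)"
    using fb unfolding lp_feasible_bounded_def by auto
  have bddZ: "bdd_above ((\<lambda>z. Es c \<bullet> z) ` ?Z)"
  proof -
    have "(\<lambda>z. Es c \<bullet> z) ` ?Z \<subseteq> (\<lambda>y. c \<bullet> y) ` ?F"
    proof
      fix x assume "x \<in> (\<lambda>z. Es c \<bullet> z) ` ?Z"
      then obtain z where "z \<in> ?Z" "x = Es c \<bullet> z" by blast
      then have "yof z \<in> ?F" "x = c \<bullet> yof z" using feas_split Es_inner by auto
      then show "x \<in> (\<lambda>y. c \<bullet> y) ` ?F" by blast
    qed
    then show ?thesis by (rule bdd_above_mono[OF bdd])
  qed
  define good where "good S \<longleftrightarrow> card S = CARD('k \<times> bool) \<and> DD A S \<noteq> 0 \<and>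
      (\<forall>i. Gs A i \<bullet> xS A b S \<le> Hs b i)" for S
  have best: "\<exists>S. good S \<and> c \<bullet> y \<le> Es c \<bullet> xS A b S" if y: "y \<in> ?F" for y
  proof -
    have z0: "\<forall>i. Gs A i \<bullet> zof y \<le> Hs b i" by (rule feas_zof[OF y])
    obtain z where z: "\<forall>i. Gs A i \<bullet> z \<le> Hs b i" "Es c \<bullet> zof y \<le> Es c \<bullet> z"
      "\<forall>v. (\<forall>i. Gs A i \<bullet> z = Hs b i \<longrightarrow> Gs A i \<bullet> v = 0) \<longrightarrow> v = 0"
      using core[where G="Gs A" and h="Hs b" and e="Es c", OF Gs_full[of A] bddZ z0] by blast
    define T where "T = {i. Gs A i \<bullet> z = Hs b i}"
    have "\<And>v. (\<forall>i\<in>T. Gs A i \<bullet> v = 0) \<Longrightarrow> v = 0" using z(3) unfolding T_def by auto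
    from basis_sel[of T "Gs A", OF this] obtain S where S: "S \<subseteq> T" "card S = CARD('k \<times> bool)"
      "\<forall>\<sigma>. bij_betw \<sigma> UNIV S \<longrightarrow> det (\<chi> r. Gs A (\<sigma> r)) \<noteq> 0" by blast
    have "\<exists>\<sigma>. bij_betw \<sigma> (UNIV :: ('k \<times> bool) set) S"
      using finite_same_card_bij[of "UNIV :: ('k \<times> bool) set" S] S(2) by simp
    then have bij: "bij_betw (sig S) UNIV S" unfolding sig_def by (rule someI_ex)
    have D: "DD A S \<noteq> 0" using S(3) bij unfolding DD_def MSm_def by blast
    have "\<forall>r. Gs A (sig S r) \<bullet> z = Hs b (sig S r)"
      using bij S(1) unfolding T_def bij_betw_def by auto
    then have zx: "z = xS A b S" by (rule xS_unique[OF D])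
    have "c \<bullet> y = Es c \<bullet> zof y" by (simp add: Es_inner yof_zof)
    then show ?thesis using z(1,2) zx S(2) D unfolding good_def by (intro exI[of _ S]) auto
  qed
  show ?thesis
  proof
    assume t: "t \<le> lp_value c A b"
    define Good where "Good = {S. good S}"
    have finG: "finite Good" by simp
    obtain y0 where "y0 \<in> ?F" using ne by auto
    then have Gne: "Good \<noteq> {}" using best unfolding Good_def by blast
    define M where "M = Max ((\<lambda>S. Es c \<bullet> xS A b S) ` Good)"
    have "lp_value c A b \<le> M" unfolding lp_value_def
    proof (rule cSup_least)
      show "(\<lambda>y. c \<bullet> y) ` ?F \<noteq> {}" using ne by auto
      fix x assume "x \<in> (\<lambda>y. c \<bullet> y) ` ?F"
      then obtain y where "y \<in> ?F" "x = c \<bullet> y" by auto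
      then obtain S where S: "good S" "x \<le> Es c \<bullet> xS A b S" using best by blast
      have "Es c \<bullet> xS A b S \<le> M" unfolding M_def using finG S(1) by (intro Max_ge) (auto simp: Good_def)
      then show "x \<le> M" using S(2) by linarith
    qed
    moreover have "M \<in> (\<lambda>S. Es c \<bullet> xS A b S) ` Good" unfolding M_def using finG Gne by (intro Max_in) auto
    then obtain S where S: "good S" "M = Es c \<bullet> xS A b S" by (auto simp: Good_def)
    ultimately have "t \<le> Es c \<bullet> xS A b S" using t by linarith
    then show "\<exists>S. card S = CARD('k \<times> bool) \<and> DD A S \<noteq> 0 \<and>
           (\<forall>i. sgn (QQ A b S i) * sgn (DD A S) \<le> 0) \<and> sgn (RR t c A b S) * sgn (DD A S) \<ge> 0"
      using S(1) xS_ineq xS_obj unfolding good_def by blast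
  next
    assume "\<exists>S. card S = CARD('k \<times> bool) \<and> DD A S \<noteq> 0 \<and>
           (\<forall>i. sgn (QQ A b S i) * sgn (DD A S) \<le> 0) \<and> sgn (RR t c A b S) * sgn (DD A S) \<ge> 0"
    then obtain S where S: "DD A S \<noteq> 0" "\<forall>i. sgn (QQ A b S i) * sgn (DD A S) \<le> 0"
      "sgn (RR t c A b S) * sgn (DD A S) \<ge> 0" by blast
    have "\<forall>i. Gs A i \<bullet> xS A b S \<le> Hs b i" using xS_ineq[OF S(1)] S(2) by blast
    then have y: "yof (xS A b S) \<in> ?F" by (rule feas_split)
    have "t \<le> c \<bullet> yof (xS A b S)" using xS_obj[OF S(1)] S(3) Es_inner by metis
    also have "\<dots> \<le> lp_value c A b" unfolding lp_value_def
      by (rule cSup_upper[OF imageI[OF y] bdd])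
    finally show "t \<le> lp_value c A b" .
  qed
qed

lemma pdl_diff:
  assumes "poly_deg_le d f" "poly_deg_le d g"
  shows "poly_deg_le d (\<lambda>\<theta>. f \<theta> - g \<theta>)"
proof -
  have "poly_deg_le d (\<lambda>\<theta>. f \<theta> + (-1) * g \<theta>)"
    by (intro pdl_add pdl_scale assms)
  then show ?thesis by simp
qed

lemma pdl_Gs:
  fixes A :: "real^'v \<Rightarrow> real^'k^'m"
  assumes "\<forall>i j. poly_deg_le d (\<lambda>\<theta>. A \<theta> $ i $ j)"
  shows "poly_deg_le d (\<lambda>\<theta>. Gs (A \<theta>) i $ col)"
proof (cases i)
  case (Inl r)
  show ?thesis
  proof (cases "snd col")
    case True then show ?thesis using Inl assms by (simp add: Gs_def)
  next
    case False
    have "poly_deg_le d (\<lambda>\<theta>. (-1) * A \<theta> $ r $ fst col)" using assms by (intro pdl_scale) simp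
    then show ?thesis using Inl False by (simp add: Gs_def)
  qed
next
  case (Inr q) then show ?thesis by (simp add: Gs_def pdl_const)
qed

lemma pdl_Hs:
  fixes b :: "real^'v \<Rightarrow> real^'m"
  assumes "\<forall>i. poly_deg_le d (\<lambda>\<theta>. b \<theta> $ i)"
  shows "poly_deg_le d (\<lambda>\<theta>. Hs (b \<theta>) i :: real)"
  using assms by (cases i) (simp_all add: Hs_def pdl_const)

lemma pdl_Es:
  fixes c :: "real^'v \<Rightarrow> real^'k"
  assumes "\<forall>j. poly_deg_le d (\<lambda>\<theta>. c \<theta> $ j)"
  shows "poly_deg_le d (\<lambda>\<theta>. Es (c \<theta>) $ col)"
proof (cases "snd col")
  case True then show ?thesis using assms by (simp add: Es_def)
next
  case False
  have "poly_deg_le d (\<lambda>\<theta>. (-1) * c \<theta> $ fst col)" using assms by (intro pdl_scale) simp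
  then show ?thesis using False by (simp add: Es_def)
qed

lemma card_insert_le_Suc: "finite A \<Longrightarrow> card (insert x A) \<le> Suc (card A)"
  by (simp add: card_insert_if)

theorem lemma1:
  fixes c :: "real^'v \<Rightarrow> real^'k"
    and A :: "real^'v \<Rightarrow> real^'k^'m"
    and b :: "real^'v \<Rightarrow> real^'m"
    and d :: nat and t :: real
  assumes "d > 0"
    and "\<forall>j. poly_deg_le d (\<lambda>\<theta>. c \<theta> $ j)"
    and "\<forall>i j. poly_deg_le d (\<lambda>\<theta>. A \<theta> $ i $ j)"
    and "\<forall>i. poly_deg_le d (\<lambda>\<theta>. b \<theta> $ i)"
    and "\<forall>\<theta>. lp_feasible_bounded (c \<theta>) (A \<theta>) (b \<theta>)"
  shows "\<exists>ps :: (real^'v \<Rightarrow> real) list.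
           length ps \<le> ((CARD('m) + 2 * CARD('k)) choose (2 * CARD('k))) * (CARD('m) + 2 * CARD('k) + 2)
         \<and> (\<forall>p\<in>set ps. poly_deg_le ((2 * CARD('k) + 1) * d) p)
         \<and> (\<forall>\<theta> \<theta>'. (\<forall>p\<in>set ps. sgn (p \<theta>) = sgn (p \<theta>')) \<longrightarrow>
               (lp_value (c \<theta>) (A \<theta>) (b \<theta>) \<ge> t \<longleftrightarrow> lp_value (c \<theta>') (A \<theta>') (b \<theta>') \<ge> t))"
proof -
  define n where "n = CARD('k \<times> bool)"
  have n2: "n = 2 * CARD('k)" unfolding n_def by simp
  have cardI: "CARD('m + 'k \<times> bool) = CARD('m) + 2 * CARD('k)"
    by (simp add: UNIV_Plus_UNIV[symmetric] card_Plus del: UNIV_Plus_UNIV)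
  define Ss where "Ss = {S :: ('m + 'k \<times> bool) set. card S = n}"
  define Dp where "Dp S = (\<lambda>\<theta>. DD (A \<theta>) S)" for S
  define Qp where "Qp S i = (\<lambda>\<theta>. QQ (A \<theta>) (b \<theta>) S i)" for S i
  define Rp where "Rp S = (\<lambda>\<theta>. RR t (c \<theta>) (A \<theta>) (b \<theta>) S)" for S
  define P where "P = (\<Union>S\<in>Ss. insert (Dp S) (insert (Rp S) (range (Qp S))))"
  have finSs: "finite Ss" by simp
  have cardSs: "card Ss = (CARD('m) + 2 * CARD('k)) choose (2 * CARD('k))"
  proof -
    have "Ss = {B. B \<subseteq> UNIV \<and> card B = n}" unfolding Ss_def by simp
    then show ?thesis using n_subsets[of "UNIV :: ('m + 'k \<times> bool) set" n] cardI n2 by (simp add: mult.commute)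
  qed
  have finP: "finite P" unfolding P_def using finSs by simp
  have "card P \<le> (\<Sum>S\<in>Ss. card (insert (Dp S) (insert (Rp S) (range (Qp S)))))"
    unfolding P_def by (rule card_UN_le[OF finSs])
  also have "\<dots> \<le> (\<Sum>S\<in>Ss. CARD('m) + 2 * CARD('k) + 2)"
  proof (rule sum_mono)
    fix S
    have "card (range (Qp S)) \<le> CARD('m + 'k \<times> bool)" by (rule card_image_le) simp
    moreover have "card (insert (Dp S) (insert (Rp S) (range (Qp S)))) \<le> Suc (Suc (card (range (Qp S))))"
    proof -
      have "card (insert (Rp S) (range (Qp S))) \<le> Suc (card (range (Qp S)))"
        by (rule card_insert_le_Suc) simp
      moreover have "card (insert (Dp S) (insert (Rp S) (range (Qp S)))) \<le> Suc (card (insert (Rp S) (range (Qp S))))"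
        by (rule card_insert_le_Suc) simp
      ultimately show ?thesis by linarith
    qed
    ultimately show "card (insert (Dp S) (insert (Rp S) (range (Qp S)))) \<le> CARD('m) + 2 * CARD('k) + 2"
      using cardI by linarith
  qed
  also have "\<dots> = card Ss * (CARD('m) + 2 * CARD('k) + 2)" by simp
  finally have cardP: "card P \<le> ((CARD('m) + 2 * CARD('k)) choose (2 * CARD('k))) * (CARD('m) + 2 * CARD('k) + 2)"
    using cardSs by simp
  obtain ps where ps: "set ps = P" "distinct ps" using finite_distinct_list[OF finP] by blast
  have lenps: "length ps = card P" using ps distinct_card by metis
  have eG: "poly_deg_le d (\<lambda>\<theta>. Gs (A \<theta>) i $ col)" for i col by (rule pdl_Gs[OF assms(3)])
  have eH: "poly_deg_le d (\<lambda>\<theta>. Hs (b \<theta>) i :: real)" for i by (rule pdl_Hs[OF assms(4)])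
  have eE: "poly_deg_le d (\<lambda>\<theta>. Es (c \<theta>) $ col)" for col by (rule pdl_Es[OF assms(2)])
  have degD: "poly_deg_le (n * d) (Dp S)" for S
    unfolding Dp_def DD_def n_def by (rule pdl_det) (simp add: MSm_def eG)
  have degN: "poly_deg_le (n * d) (\<lambda>\<theta>. NN (A \<theta>) (b \<theta>) S col)" for S col
    unfolding NN_def n_def
  proof (rule pdl_det)
    fix i j
    show "poly_deg_le d (\<lambda>\<theta>. (\<chi> i j. if j = col then hS (b \<theta>) S $ i else MSm (A \<theta>) S $ i $ j) $ i $ j)"
      by (cases "j = col") (simp_all add: MSm_def hS_def eG eH)
  qed
  have degQ: "poly_deg_le (d + n * d) (Qp S i)" for S i
    unfolding Qp_def QQ_def
    by (intro pdl_diff pdl_sum pdl_mult eG eH degN degD[unfolded Dp_def]) simp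
  have degR: "poly_deg_le (d + n * d) (Rp S)" for S
  proof -
    have "poly_deg_le (d + n * d) (\<lambda>\<theta>. t * DD (A \<theta>) S)"
      by (rule pdl_mono[OF pdl_scale[OF degD[unfolded Dp_def]]]) simp
    then show ?thesis unfolding Rp_def RR_def
      by (intro pdl_diff pdl_sum pdl_mult eE degN pdl_const degD[unfolded Dp_def]) simp_all
  qed
  have Dfin: "(2 * CARD('k) + 1) * d = d + n * d" using n2 by simp
  have degP: "\<forall>p\<in>P. poly_deg_le ((2 * CARD('k) + 1) * d) p"
  proof
    fix p assume "p \<in> P"
    then obtain S where "S \<in> Ss" "p = Dp S \<or> p = Rp S \<or> p \<in> range (Qp S)" unfolding P_def by blast
    then consider "p = Dp S" | "p = Rp S" | i where "p = Qp S i" by blast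
    then show "poly_deg_le ((2 * CARD('k) + 1) * d) p"
    proof cases
      case 1 then show ?thesis unfolding Dfin by (simp add: pdl_mono[OF degD])
    next
      case 2 then show ?thesis unfolding Dfin by (simp add: degR)
    next
      case 3 then show ?thesis unfolding Dfin by (simp add: degQ)
    qed
  qed
  have signs: "(t \<le> lp_value (c \<theta>) (A \<theta>) (b \<theta>)) \<longleftrightarrow> (t \<le> lp_value (c \<theta>') (A \<theta>') (b \<theta>'))"
    if sg: "\<forall>p\<in>P. sgn (p \<theta>) = sgn (p \<theta>')" for \<theta> \<theta>'
  proof -
    have eqS: "(DD (A \<theta>) S \<noteq> 0 \<and> (\<forall>i. sgn (QQ (A \<theta>) (b \<theta>) S i) * sgn (DD (A \<theta>) S) \<le> 0) \<and>
                sgn (RR t (c \<theta>) (A \<theta>) (b \<theta>) S) * sgn (DD (A \<theta>) S) \<ge> 0) \<longleftrightarrow>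
               (DD (A \<theta>') S \<noteq> 0 \<and> (\<forall>i. sgn (QQ (A \<theta>') (b \<theta>') S i) * sgn (DD (A \<theta>') S) \<le> 0) \<and>
                sgn (RR t (c \<theta>') (A \<theta>') (b \<theta>') S) * sgn (DD (A \<theta>') S) \<ge> 0)"
      if S: "S \<in> Ss" for S
    proof -
      have inP: "Dp S \<in> P" "Rp S \<in> P" "\<And>i. Qp S i \<in> P" using S unfolding P_def by auto
      have "sgn (DD (A \<theta>) S) = sgn (DD (A \<theta>') S)"
        using sg[rule_format, OF inP(1)] unfolding Dp_def by simp
      moreover have "sgn (RR t (c \<theta>) (A \<theta>) (b \<theta>) S) = sgn (RR t (c \<theta>') (A \<theta>') (b \<theta>') S)"
        using sg[rule_format, OF inP(2)] unfolding Rp_def by simp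
      moreover have "\<And>i. sgn (QQ (A \<theta>) (b \<theta>) S i) = sgn (QQ (A \<theta>') (b \<theta>') S i)"
        using sg[rule_format, OF inP(3)] unfolding Qp_def by simp
      moreover have "(DD (A \<theta>) S \<noteq> 0) = (sgn (DD (A \<theta>) S) \<noteq> 0)"
        "(DD (A \<theta>') S \<noteq> 0) = (sgn (DD (A \<theta>') S) \<noteq> 0)" by (simp_all add: sgn_eq_0_iff)
      ultimately show ?thesis by simp
    qed
    show ?thesis
      unfolding key[OF assms(5)[rule_format, of \<theta>]] key[OF assms(5)[rule_format, of \<theta>']]
      using eqS unfolding Ss_def n_def by blast
  qed
  show ?thesis
    using cardP lenps ps(1) degP signs by (intro exI[of _ ps]) auto
qed

end
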